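(* Let $(x_n)_{n \in \mathbb{N}}$ be a sequence in $[0,1)$ with the following property: there exist $s \in \mathbb{N}$ and positive real numbers $K$ and $\gamma$ such that for infinitely many $N$ the point set $x_1, \ldots, x_N$ has a subset $x_{j_1}, \ldots, x_{j_M}$ with $M \geq \gamma N$ elements which is contained in some finite set of points of $[0,1)$ of cardinality at most $KN$ having at most $s$ different distances between neighbouring elements (gaps). Then $(x_n)_{n \in \mathbb{N}}$ does not have Poissonian pair correlations.
   Context: For real $x$, $\|x\|$ denotes the distance from $x$ to the nearest integer. A sequence $(x_n)_{n\in\mathbb{N}}$ in $[0,1)$ has Poissonian pair correlations if for every $s \geq 0$, $$F_N(s) := \frac{1}{N}\#\left\{1 \leq l \neq m \leq N : \|x_l - x_m\| \leq \frac{s}{N}\right\} \to 2s \quad (N\to\infty).$$ For a finite point set in $[0,1)$, the gaps are the distances between neighbouring elements, i.e. between consecutive points when the set is arranged in increasing order. *)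

theory Defs
  imports Complex_Main
begin

definition dist_int :: "real \<Rightarrow> real" where
  "dist_int t = \<bar>t - real_of_int (round t)\<bar>"

definition pair_corr :: "(nat \<Rightarrow> real) \<Rightarrow> nat \<Rightarrow> real \<Rightarrow> real" where
  "pair_corr x N s = (1 / real N) *
     real (card {(l, m). l \<in> {1..N} \<and> m \<in> {1..N} \<and> l \<noteq> m \<and>
                         dist_int (x l - x m) \<le> s / real N})"

definition poissonian_pair_corr :: "(nat \<Rightarrow> real) \<Rightarrow> bool" where
  "poissonian_pair_corr x \<longleftrightarrow>
     (\<forall>s::real. s \<ge> 0 \<longrightarrow> (\<lambda>N. pair_corr x N s) \<longlonglongrightarrow> 2 * s)"

definition gaps :: "real set \<Rightarrow> real set" where
  "gaps A = {b - a | a b. a \<in> A \<and> b \<in> A \<and> a < b \<and> \<not> (\<exists>c\<in>A. a < c \<and> c < b)}"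

end

theory Submission imports Defs begin

fun gsums :: "real set \<Rightarrow> nat \<Rightarrow> real set" where
  "gsums G 0 = {0}"
| "gsums G (Suc k) = (\<lambda>(g,t). g + t) ` (G \<times> gsums G k)"

lemma gsums_fin_card: "finite G \<Longrightarrow> finite (gsums G k) \<and> card (gsums G k) \<le> card G ^ k"
proof (induction k)
  case 0 then show ?case by simp
next
  case (Suc k)
  have "card (gsums G (Suc k)) \<le> card (G \<times> gsums G k)"
    using card_image_le[of "G \<times> gsums G k" "\<lambda>(g,t). g + t"] Suc by simp
  also have "\<dots> = card G * card (gsums G k)" by (simp add: card_cartesian_product)
  also have "\<dots> \<le> card G * card G ^ k" using Suc by simp
  finally show ?case using Suc by simp
qed

lemma finite_gaps: "finite A \<Longrightarrow> finite (gaps A)"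
proof -
  assume "finite A"
  have "gaps A \<subseteq> (\<lambda>(a,b). b - a) ` (A \<times> A)" unfolding gaps_def by auto
  then show ?thesis using \<open>finite A\<close> by (meson finite_SigmaI finite_imageI finite_subset)
qed

lemma gaps_pos: "g \<in> gaps A \<Longrightarrow> g > 0" unfolding gaps_def by auto

lemma gap_sum:
  assumes A: "finite A"
  shows "a \<in> A \<Longrightarrow> b \<in> A \<Longrightarrow> a \<le> b \<Longrightarrow> card (A \<inter> {a<..b}) = n \<Longrightarrow> b - a \<in> gsums (gaps A) n"
proof (induction n arbitrary: a)
  case 0
  have "A \<inter> {a<..b} = {}" using 0 A by simp
  then have "a = b" using 0 by auto
  then show ?case by simp
next
  case (Suc n)
  define S where "S = A \<inter> {a<..b}"
  have finS: "finite S" using A S_def by simp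
  have neS: "S \<noteq> {}" using Suc.prems(4) S_def by auto
  define c where "c = Min S"
  have cS: "c \<in> S" using finS neS c_def by simp
  have cmin: "e \<in> S \<Longrightarrow> c \<le> e" for e using finS c_def by simp
  have g: "c - a \<in> gaps A"
    unfolding gaps_def
  proof (intro CollectI exI conjI)
    show "c - a = c - a" by simp
    show "a \<in> A" "c \<in> A" "a < c" using Suc.prems cS S_def by auto
    show "\<not> (\<exists>e\<in>A. a < e \<and> e < c)"
    proof
      assume "\<exists>e\<in>A. a < e \<and> e < c"
      then obtain e where "e \<in> A" "a < e" "e < c" by blast
      moreover have "c \<le> b" using cS S_def by auto
      ultimately have "e \<in> S" using S_def by auto
      then show False using cmin \<open>e < c\<close> by fastforce
    qed
  qed
  have eq: "A \<inter> {c<..b} = S - {c}"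
  proof
    show "A \<inter> {c<..b} \<subseteq> S - {c}" using cS S_def by auto
    show "S - {c} \<subseteq> A \<inter> {c<..b}" using cmin S_def by force
  qed
  have "card (A \<inter> {c<..b}) = n" using eq finS cS Suc.prems(4) S_def by simp
  moreover have "c \<in> A" "c \<le> b" using cS S_def by auto
  ultimately have "b - c \<in> gsums (gaps A) n" using Suc.IH Suc.prems by blast
  then have "(c - a) + (b - c) \<in> gsums (gaps A) (Suc n)" using g by force
  then show ?case by simp
qed

lemma cardD:
  assumes "finite A" "card (gaps A) \<le> s"
  shows "finite (\<Union>k\<in>{..r}. gsums (gaps A) k) \<and> card (\<Union>k\<in>{..r}. gsums (gaps A) k) \<le> Suc r * Suc s ^ r"
proof -
  have fg: "finite (gaps A)" using assms finite_gaps by blast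
  have "card (\<Union>k\<in>{..r}. gsums (gaps A) k) \<le> (\<Sum>k\<in>{..r}. card (gsums (gaps A) k))"
    by (rule card_UN_le) simp
  also have "\<dots> \<le> (\<Sum>k\<in>{..r}. Suc s ^ r)"
  proof (rule sum_mono)
    fix k assume "k \<in> {..r}"
    have "card (gsums (gaps A) k) \<le> card (gaps A) ^ k" using gsums_fin_card fg by blast
    also have "\<dots> \<le> Suc s ^ k" using assms(2) by (simp add: power_mono)
    also have "\<dots> \<le> Suc s ^ r" using \<open>k \<in> {..r}\<close> by (simp add: power_increasing)
    finally show "card (gsums (gaps A) k) \<le> Suc s ^ r" .
  qed
  also have "\<dots> = Suc r * Suc s ^ r" by simp
  finally show ?thesis using gsums_fin_card fg by auto
qed


lemma markov_count:
  fixes f :: "nat \<Rightarrow> real"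
  assumes "finite S" "\<And>i. i \<in> S \<Longrightarrow> f i \<ge> 0" "B \<subseteq> S" "\<And>i. i \<in> B \<Longrightarrow> f i \<ge> c"
  shows "real (card B) * c \<le> sum f S"
proof -
  have "real (card B) * c = (\<Sum>i\<in>B. c)" by simp
  also have "\<dots> \<le> sum f B" using assms(4) by (rule sum_mono)
  also have "\<dots> \<le> sum f S" using assms by (intro sum_mono2) auto
  finally show ?thesis .
qed

lemma key:
  fixes x :: "nat \<Rightarrow> real" and J :: "nat set" and A :: "real set" and r :: nat and c :: real
  assumes J: "finite J" and A: "finite A" "A \<subseteq> {0..<1}" and xJ: "x ` J \<subseteq> A" and c: "c > 0"
  shows "\<exists>P. finite P \<and> P \<subseteq> {(l,m). l\<in>J \<and> m\<in>J \<and> l\<noteq>m \<and> x l - x m \<in> (\<Union>k\<in>{..r}. gsums (gaps A) k)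
           \<and> 0 \<le> x l - x m \<and> x l - x m \<le> c}
         \<and> real (card P) \<ge> real (card J) - 1 - 1/c - real (card A)/real (Suc r)"
proof -
  define V where "V = x ` J"
  define v where "v = card V"
  define w where "w = sorted_list_of_set V"
  define p where "p = (\<lambda>a. SOME j. j \<in> J \<and> x j = a)"
  have finV: "finite V" using J V_def by simp
  have lenw: "length w = v" and setw: "set w = V" and distw: "distinct w"
    using finV by (simp_all add: w_def v_def)
  have ssw: "sorted_wrt (<) w" unfolding w_def by simp
  have p: "p a \<in> J \<and> x (p a) = a" if "a \<in> V" for a
  proof -
    have "\<exists>j. j \<in> J \<and> x j = a" using that V_def by auto
    then show ?thesis unfolding p_def by (rule someI_ex)
  qed
  have wlt: "w!i < w!j" if "i < j" "j < v" for i j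
    using sorted_wrt_nth_less[OF ssw that(1)] that lenw by simp
  have wle: "w!i \<le> w!j" if "i \<le> j" "j < v" for i j
    using wlt[of i j] that by (cases "i = j") auto
  have wV: "w!i \<in> V" if "i < v" for i using that lenw setw nth_mem by blast
  have wA: "w!i \<in> A" if "i < v" for i using wV[OF that] xJ V_def by blast
  have w01: "0 \<le> w!i \<and> w!i < 1" if "i < v" for i using wA[OF that] A(2) by auto
  define cnt where "cnt i = card (A \<inter> {w!i<..w!Suc i})" for i
  define dif where "dif i = w!Suc i - w!i" for i
  define I where "I = {i. i < v - 1 \<and> dif i \<le> c \<and> cnt i \<le> r}"
  define B1 where "B1 = {i. i < v - 1 \<and> dif i > c}"
  define B2 where "B2 = {i. i < v - 1 \<and> cnt i > r}"
  have finI: "finite I" "finite B1" "finite B2" unfolding I_def B1_def B2_def by auto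
  have cover: "{..<v-1} \<subseteq> I \<union> B1 \<union> B2" by (auto simp: I_def B1_def B2_def)
  have "v - 1 \<le> card (I \<union> B1 \<union> B2)"
    using card_mono[OF _ cover] finI by simp
  also have "\<dots> \<le> card I + card B1 + card B2"
    by (metis card_Un_le add_le_mono1 le_trans)
  finally have cov: "v - 1 \<le> card I + card B1 + card B2" .
  have difnn: "i \<in> {..<v-1} \<Longrightarrow> dif i \<ge> 0" for i using wle[of i "Suc i"] by (auto simp: dif_def)
  have tel: "(\<Sum>i<v-1. dif i) = w!(v-1) - w!0" unfolding dif_def by (rule sum_lessThan_telescope)
  have tel1: "(\<Sum>i<v-1. dif i) < 1"
  proof (cases "v = 0")
    case True then show ?thesis by simp
  next
    case False then show ?thesis using tel w01[of "v-1"] w01[of 0] by simp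
  qed
  have "real (card B1) * c \<le> (\<Sum>i<v-1. dif i)"
    by (rule markov_count) (auto simp: B1_def difnn)
  then have B1b: "real (card B1) \<le> 1 / c" using tel1 c by (simp add: field_simps)
  have telc: "(\<Sum>i<n. cnt i) = card (A \<inter> {w!0<..w!n})" if "n < v" for n
    using that
  proof (induction n)
    case 0 then show ?case by simp
  next
    case (Suc n)
    have "A \<inter> {w!0<..w!Suc n} = (A \<inter> {w!0<..w!n}) \<union> (A \<inter> {w!n<..w!Suc n})"
      using wle[of 0 n] wle[of n "Suc n"] Suc.prems by auto
    moreover have "(A \<inter> {w!0<..w!n}) \<inter> (A \<inter> {w!n<..w!Suc n}) = {}" by auto
    ultimately have "card (A \<inter> {w!0<..w!Suc n}) = card (A \<inter> {w!0<..w!n}) + cnt n"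
      using A(1) unfolding cnt_def by (simp add: card_Un_disjoint)
    then show ?case using Suc by simp
  qed
  have telc1: "(\<Sum>i<v-1. cnt i) \<le> card A"
  proof (cases "v = 0")
    case True then show ?thesis by simp
  next
    case False then show ?thesis using telc[of "v-1"] A(1) card_mono[of A] by simp
  qed
  have "real (card B2) * real (Suc r) \<le> (\<Sum>i<v-1. real (cnt i))"
    by (rule markov_count) (auto simp: B2_def)
  also have "\<dots> \<le> real (card A)" using telc1 by (metis of_nat_le_iff of_nat_sum)
  finally have B2b: "real (card B2) \<le> real (card A) / real (Suc r)" by (simp add: field_simps)
  define F where "F = (\<lambda>l. (l, p (x l))) ` (J - p ` V)"
  define G where "G = (\<lambda>i. (p (w!Suc i), p (w!i))) ` I"
  have injp: "inj_on p V" by (metis inj_onI p)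
  have pVJ: "p ` V \<subseteq> J" using p by auto
  have cardF: "card F = card J - v"
  proof -
    have "card F = card (J - p ` V)" unfolding F_def by (simp add: card_image inj_on_def)
    also have "\<dots> = card J - card (p ` V)" using pVJ J by (simp add: card_Diff_subset finite_subset)
    also have "card (p ` V) = v" using injp v_def by (simp add: card_image)
    finally show ?thesis .
  qed
  have vJ: "v \<le> card J" unfolding v_def V_def using J card_image_le by blast
  have cardG: "card G = card I"
    unfolding G_def
  proof (rule card_image, rule inj_onI)
    fix i j assume ij: "i \<in> I" "j \<in> I" "(p (w!Suc i), p (w!i)) = (p (w!Suc j), p (w!j))"
    have "x (p (w!Suc i)) = x (p (w!Suc j))" using ij by simp
    moreover have "Suc i < v" "Suc j < v" using ij I_def by auto
    ultimately have "w!Suc i = w!Suc j" using p wV by metis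
    then show "i = j" using nth_eq_iff_index_eq[OF distw] \<open>Suc i < v\<close> \<open>Suc j < v\<close> lenw by auto
  qed
  have disj: "F \<inter> G = {}"
  proof (rule ccontr)
    assume "F \<inter> G \<noteq> {}"
    then obtain l i where l: "l \<in> J" and i: "i \<in> I" and eq: "(l, p (x l)) = (p (w!Suc i), p (w!i))"
      unfolding F_def G_def by auto
    have iv: "Suc i < v" using i I_def by auto
    have xl: "x l \<in> V" using l V_def by auto
    have l1: "l = p (w!Suc i)" and l2: "p (x l) = p (w!i)" using eq by (meson prod.inject)+
    have "x l = w!Suc i" using l1 p[OF wV[OF iv]] by simp
    moreover have "x (p (x l)) = x l" using p xl by blast
    moreover have "x (p (x l)) = w!i" using l2 p[OF wV[of i]] iv by simp
    ultimately show False using wlt[of i "Suc i"] iv by simp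
  qed
  define P where "P = F \<union> G"
  have finP: "finite P" unfolding P_def F_def G_def using J finI by simp
  have cardP: "card P = card F + card G"
    unfolding P_def using disj finP P_def by (simp add: card_Un_disjoint)
  have "real (card P) = real (card J) - real v + real (card I)" using cardP cardF cardG vJ by simp
  moreover have "real (card I) \<ge> real v - 1 - real (card B1) - real (card B2)" using cov by linarith
  ultimately have bound: "real (card P) \<ge> real (card J) - 1 - 1/c - real (card A)/real (Suc r)"
    using B1b B2b by linarith
  have sub: "P \<subseteq> {(l,m). l\<in>J \<and> m\<in>J \<and> l\<noteq>m \<and> x l - x m \<in> (\<Union>k\<in>{..r}. gsums (gaps A) k)
           \<and> 0 \<le> x l - x m \<and> x l - x m \<le> c}"
  proof
    fix q assume "q \<in> P"
    then consider (F) l where "l \<in> J - p ` V" "q = (l, p (x l))"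
      | (G) i where "i \<in> I" "q = (p (w!Suc i), p (w!i))"
      unfolding P_def F_def G_def by auto
    then show "q \<in> {(l,m). l\<in>J \<and> m\<in>J \<and> l\<noteq>m \<and> x l - x m \<in> (\<Union>k\<in>{..r}. gsums (gaps A) k)
           \<and> 0 \<le> x l - x m \<and> x l - x m \<le> c}"
    proof cases
      case F
      have xl: "x l \<in> V" using F V_def by auto
      have "x l - x (p (x l)) = 0" using p xl by simp
      moreover have "(0::real) \<in> (\<Union>k\<in>{..r}. gsums (gaps A) k)" by (intro UN_I[of 0]) auto
      moreover have "l \<noteq> p (x l)" using F xl by auto
      ultimately show ?thesis using F p xl c by auto
    next
      case G
      have iv: "Suc i < v" "cnt i \<le> r" "dif i \<le> c" using G I_def by auto
      have e: "x (p (w!Suc i)) - x (p (w!i)) = dif i" using p wV iv unfolding dif_def by auto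
      have "dif i \<in> gsums (gaps A) (cnt i)"
        unfolding dif_def cnt_def using gap_sum[OF A(1)] wA iv wle[of i "Suc i"] by simp
      then have m: "dif i \<in> (\<Union>k\<in>{..r}. gsums (gaps A) k)" using iv by auto
      have ne: "p (w!Suc i) \<noteq> p (w!i)" using e wlt[of i "Suc i"] iv unfolding dif_def by auto
      have "0 \<le> dif i" using wle[of i "Suc i"] iv unfolding dif_def by simp
      then show ?thesis using G e m ne p wV iv by auto
    qed
  qed
  show ?thesis using finP sub bound by blast
qed


lemma dist_int_small: "0 \<le> t \<Longrightarrow> t < 1/2 \<Longrightarrow> dist_int t = t"
  unfolding dist_int_def using round_unique'[of t 0] by simp

theorem theorem1:
  fixes x :: "nat \<Rightarrow> real" and s :: nat and K \<gamma> :: real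
  assumes range: "\<forall>n\<ge>1. x n \<in> {0..<1}"
    and K_pos: "K > 0" and gamma_pos: "\<gamma> > 0"
    and inf: "infinite {N::nat. \<exists>J A. J \<subseteq> {1..N} \<and> real (card J) \<ge> \<gamma> * real N \<and>
                 finite A \<and> A \<subseteq> {0..<1} \<and> real (card A) \<le> K * real N \<and>
                 x ` J \<subseteq> A \<and> card (gaps A) \<le> s}"
  shows "\<not> poissonian_pair_corr x"
proof
  assume pp: "poissonian_pair_corr x"
  define T where "T = 4 / \<gamma>"
  define r where "r = nat \<lceil>4 * K / \<gamma>\<rceil>"
  define Q where "Q = Suc r * Suc s ^ r"
  define \<eta> where "\<eta> = \<gamma> / (16 * real Q)"
  define Kg where "Kg = nat \<lceil>T / \<eta>\<rceil>"
  have Qpos: "real Q > 0" unfolding Q_def by (simp only: of_nat_0_less_iff) simp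
  have eta: "\<eta> > 0" unfolding \<eta>_def using gamma_pos Qpos by simp
  have T: "T > 0" unfolding T_def using gamma_pos by simp
  have rK: "real (Suc r) \<ge> 4 * K / \<gamma>" unfolding r_def by linarith
  define S where "S N t = {(l, m). l \<in> {1..N} \<and> m \<in> {1..N} \<and> l \<noteq> m \<and> dist_int (x l - x m) \<le> t / real N}" for N t
  have pcS: "pair_corr x N t = real (card (S N t)) / real N" for N t
    unfolding pair_corr_def S_def by simp
  have finS: "finite (S N t)" for N t
    by (rule finite_subset[of _ "{1..N} \<times> {1..N}"]) (auto simp: S_def)
  have lim: "\<And>t. t \<ge> 0 \<Longrightarrow> (\<lambda>N. pair_corr x N t) \<longlonglongrightarrow> 2 * t"
    using pp unfolding poissonian_pair_corr_def by blast
  have ev1: "eventually (\<lambda>N. pair_corr x N 0 < \<eta>) sequentially"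
    using lim[of 0] eta by (simp add: order_tendstoD(2))
  have ev2: "eventually (\<lambda>N. \<forall>k\<in>{1..Kg}. pair_corr x N (real k * \<eta>) - pair_corr x N ((real k - 1) * \<eta>) < 3 * \<eta>) sequentially"
  proof (rule eventually_ball_finite)
    show "finite {1..Kg}" by simp
    show "\<forall>k\<in>{1..Kg}. eventually (\<lambda>N. pair_corr x N (real k * \<eta>) - pair_corr x N ((real k - 1) * \<eta>) < 3 * \<eta>) sequentially"
    proof
      fix k assume k: "k \<in> {1..Kg}"
      have "(\<lambda>N. pair_corr x N (real k * \<eta>) - pair_corr x N ((real k - 1) * \<eta>)) \<longlonglongrightarrow> 2 * (real k * \<eta>) - 2 * ((real k - 1) * \<eta>)"
        using k eta by (intro tendsto_diff lim) auto
      moreover have "2 * (real k * \<eta>) - 2 * ((real k - 1) * \<eta>) < 3 * \<eta>" using eta by (simp add: algebra_simps)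
      ultimately show "eventually (\<lambda>N. pair_corr x N (real k * \<eta>) - pair_corr x N ((real k - 1) * \<eta>) < 3 * \<eta>) sequentially"
        by (rule order_tendstoD(2))
    qed
  qed
  obtain N0 where N0: "\<And>N. N \<ge> N0 \<Longrightarrow> pair_corr x N 0 < \<eta> \<and> (\<forall>k\<in>{1..Kg}. pair_corr x N (real k * \<eta>) - pair_corr x N ((real k - 1) * \<eta>) < 3 * \<eta>)"
    using eventually_conj[OF ev1 ev2] unfolding eventually_sequentially by blast
  define N1 where "N1 = max N0 (nat \<lceil>8 / \<gamma>\<rceil> + 1)"
  obtain N where NS: "N \<in> {N::nat. \<exists>J A. J \<subseteq> {1..N} \<and> real (card J) \<ge> \<gamma> * real N \<and>
                 finite A \<and> A \<subseteq> {0..<1} \<and> real (card A) \<le> K * real N \<and>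
                 x ` J \<subseteq> A \<and> card (gaps A) \<le> s}" and NN1: "N \<ge> N1"
    using inf unfolding finite_nat_set_iff_bounded_le by (meson linorder_not_le order_less_imp_le)
  obtain J A where J: "J \<subseteq> {1..N}" and cJ: "real (card J) \<ge> \<gamma> * real N" and finA: "finite A"
    and A01: "A \<subseteq> {0..<1}" and cA: "real (card A) \<le> K * real N" and xJ: "x ` J \<subseteq> A"
    and gA: "card (gaps A) \<le> s" using NS by blast
  have NN0: "N \<ge> N0" using NN1 N1_def by simp
  have Nbig: "real N > 8 / \<gamma>" using NN1 N1_def by linarith
  have Npos: "real N > 0" using Nbig gamma_pos by (smt (verit) divide_pos_pos)
  have gN: "\<gamma> * real N > 8" using Nbig gamma_pos by (simp add: field_simps)
  define c where "c = T / real N"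
  have cpos: "c > 0" unfolding c_def using T Npos by simp
  have chalf: "c < 1/2" unfolding c_def T_def using gN gamma_pos Npos by (simp add: field_simps)
  define D where "D = (\<Union>k\<in>{..r}. gsums (gaps A) k)"
  obtain P where finP: "finite P" and subP: "P \<subseteq> {(l,m). l\<in>J \<and> m\<in>J \<and> l\<noteq>m \<and> x l - x m \<in> D
           \<and> 0 \<le> x l - x m \<and> x l - x m \<le> c}"
    and cP: "real (card P) \<ge> real (card J) - 1 - 1/c - real (card A)/real (Suc r)"
    using key[of J A x c r] finite_subset[OF J] finA A01 xJ cpos unfolding D_def by blast
  have "1 / c = \<gamma> * real N / 4" unfolding c_def T_def using gamma_pos Npos by simp
  moreover have "real (card A) / real (Suc r) \<le> \<gamma> * real N / 4"
  proof -
    have "real (card A) \<le> K * real N" by (rule cA)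
    also have "\<dots> \<le> (\<gamma> * real (Suc r) / 4) * real N"
      using rK gamma_pos Npos by (intro mult_right_mono) (simp_all add: field_simps)
    finally show ?thesis by (simp add: field_simps)
  qed
  ultimately have cP2: "real (card P) \<ge> \<gamma> * real N / 4" using cP cJ gN by linarith
  have DQ: "finite D" "card D \<le> Q" using cardD[OF finA gA, of r] unfolding D_def Q_def by auto
  have "0 \<in> D" unfolding D_def by (intro UN_I[of 0]) auto
  then have Dne: "D \<noteq> {}" by blast
  define f where "f d = card {q\<in>P. x (fst q) - x (snd q) = d}" for d
  have "Max (f ` D) \<in> f ` D" using Max_in[of "f ` D"] DQ Dne by simp
  then obtain d where dD: "d \<in> D" and fd: "f d = Max (f ` D)" by (metis imageE)
  have "P \<subseteq> (\<Union>d\<in>D. {q\<in>P. x (fst q) - x (snd q) = d})" using subP by auto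
  then have "card P \<le> card (\<Union>d\<in>D. {q\<in>P. x (fst q) - x (snd q) = d})"
    by (rule card_mono[rotated]) (use finP DQ in auto)
  also have "\<dots> \<le> (\<Sum>d'\<in>D. f d')" unfolding f_def by (rule card_UN_le) (rule DQ)
  also have "\<dots> \<le> (\<Sum>d'\<in>D. f d)" using fd DQ by (intro sum_mono) simp
  also have "\<dots> = card D * f d" by simp
  also have "\<dots> \<le> Q * f d" using DQ by simp
  finally have "real (card P) \<le> real Q * real (f d)" by (metis of_nat_le_iff of_nat_mult)
  then have fdbig: "real Q * real (f d) \<ge> \<gamma> * real N / 4" using cP2 by linarith
  define Pd where "Pd = {q\<in>P. x (fst q) - x (snd q) = d}"
  have "f d > 0" using fdbig gN by (cases "f d = 0") auto
  then have "Pd \<noteq> {}" unfolding f_def Pd_def by (metis card.empty less_irrefl)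
  then obtain q where "q \<in> Pd" by blast
  then have d0: "0 \<le> d" and dc: "d \<le> c" using subP unfolding Pd_def by auto
  have PdS: "Pd \<subseteq> {(l, m). l \<in> {1..N} \<and> m \<in> {1..N} \<and> l \<noteq> m \<and> dist_int (x l - x m) = d}"
    using subP J d0 dc chalf dist_int_small unfolding Pd_def by fastforce
  have "real (f d) < 3 * \<eta> * real N"
  proof (cases "d = 0")
    case True
    have "Pd \<subseteq> S N 0" using PdS True unfolding S_def by auto
    then have "card Pd \<le> card (S N 0)" using finS card_mono by blast
    moreover have "real (card (S N 0)) < \<eta> * real N"
      using N0[OF NN0] pcS[of N 0] Npos by (simp add: field_simps)
    ultimately show ?thesis using eta Npos unfolding f_def Pd_def by simp
  next
    case False
    then have dpos: "d > 0" using d0 by simp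
    define k where "k = nat \<lceil>real N * d / \<eta>\<rceil>"
    have kge: "real k \<ge> real N * d / \<eta>" unfolding k_def by linarith
    have pq: "real N * d / \<eta> > 0" using dpos Npos eta by simp
    have klt: "real k - 1 < real N * d / \<eta>" unfolding k_def using pq
      by (metis ceiling_correct ceiling_le_zero not_le of_nat_nat order_less_imp_le)
    have k1: "k \<ge> 1" using kge pq by simp
    have "real N * d \<le> T" using dc Npos unfolding c_def by (simp add: field_simps)
    then have "real N * d / \<eta> \<le> T / \<eta>" using eta by (simp add: divide_right_mono)
    then have kK: "k \<le> Kg" unfolding k_def Kg_def by (intro nat_mono ceiling_mono)
    have e1: "d \<le> real k * \<eta> / real N" using kge eta Npos by (simp add: field_simps)
    have e2: "(real k - 1) * \<eta> / real N < d" using klt eta Npos by (simp add: field_simps)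
    have sub2: "S N ((real k - 1) * \<eta>) \<subseteq> S N (real k * \<eta>)"
      unfolding S_def using eta Npos by (auto simp: field_simps)
    have "Pd \<subseteq> S N (real k * \<eta>) - S N ((real k - 1) * \<eta>)"
      using PdS e1 e2 unfolding S_def by auto
    then have "card Pd \<le> card (S N (real k * \<eta>) - S N ((real k - 1) * \<eta>))"
      using finS card_mono by (metis finite_Diff)
    also have "\<dots> = card (S N (real k * \<eta>)) - card (S N ((real k - 1) * \<eta>))"
      using sub2 finS by (simp add: card_Diff_subset)
    finally have "real (card Pd) \<le> real (card (S N (real k * \<eta>))) - real (card (S N ((real k - 1) * \<eta>)))"
      using card_mono[OF finS sub2] by linarith
    moreover have "pair_corr x N (real k * \<eta>) - pair_corr x N ((real k - 1) * \<eta>) < 3 * \<eta>"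
      using N0[OF NN0] k1 kK by auto
    then have "real (card (S N (real k * \<eta>))) - real (card (S N ((real k - 1) * \<eta>))) < 3 * \<eta> * real N"
      using pcS Npos by (simp add: field_simps diff_divide_distrib[symmetric])
    ultimately show ?thesis unfolding f_def Pd_def by simp
  qed
  then have "real Q * real (f d) < real Q * (3 * \<eta> * real N)" using Qpos by simp
  also have "\<dots> = 3 * \<gamma> * real N / 16" unfolding \<eta>_def using Qpos by (simp add: field_simps)
  finally have "real Q * real (f d) < 3 * \<gamma> * real N / 16" .
  moreover have "real Q * real (f d) \<ge> 0" by simp
  ultimately show False using fdbig gN by linarith
qed

end
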